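(* (Working in $\mathbf{ZF}+\mathbf{UFT}$.) A weakly normal generalized topological space $X$ has its Wallman strict compactification if and only if the operator $\mathrm{Ex}_{\mathcal W(X,\mathrm{Cl}_X)}$ is admissibly additive.
   Context: $\mathbf{UFT}$ is the Ultrafilter Theorem (every filter on a set extends to an ultrafilter). A generalized topological space (gts) $(X,\mathrm{Op}_X,\mathrm{Cov}_X)$ is in the sense of Delfs–Knebusch: $\mathrm{Op}_X\subseteq\mathcal P(X)$, $\mathrm{Cov}_X\subseteq\mathcal P(\mathrm{Op}_X)$ with (A1) $\emptyset,X$ open; (A2) finite unions/intersections of open sets open; (A3) finite families of open sets in $\mathrm{Cov}_X$; (A4) unions of members of $\mathrm{Cov}_X$ open; (A5) for $\mathcal U\in\mathrm{Cov}_X$ and open $V\subseteq\bigcup\mathcal U$, $\{V\cap U:U\in\mathcal U\}\in\mathrm{Cov}_X$; (A6) if $\mathcal U\in\mathrm{Cov}_X$ and $\mathcal V_U\in\mathrm{Cov}_X$ with $\bigcup\mathcal V_U=U$ then $\bigcup_U\mathcal V_U\in\mathrm{Cov}_X$; (A7) if $\mathcal U\in\mathrm{Cov}_X$, $\mathcal V\subseteq\mathrm{Op}_X$, $\bigcup\mathcal V=\bigcup\mathcal U$ and each member of $\mathcal U$ is in a member of $\mathcal V$, then $\mathcal V\in\mathrm{Cov}_X$; (A8) if $\mathcal U\in\mathrm{Cov}_X$, $V\subseteq\bigcup\mathcal U$ and all $V\cap U$ open, then $V$ open. A generalized topology in a set $Z$ is a $\mathrm{Cov}$ with $(Z,\bigcup\mathrm{Cov},\mathrm{Cov})$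 a gts. $\mathrm{Cl}_X$ = complements of open sets; $X_{top}$ = $X$ with topology generated by $\mathrm{Op}_X$. $X$ is weakly normal if disjoint sets, each a singleton or in $\mathrm{Cl}_X$, lie in disjoint open sets. $\mathcal W=\mathcal W(X,\mathrm{Cl}_X)$ is the set of ultrafilters (maximal filters) in $\mathrm{Cl}_X$ with closed base $\{[A]:A\in\mathrm{Cl}_X\}$, $[A]=\{p:A\in p\}$; $w(x)=\{A\in\mathrm{Cl}_X:x\in A\}$; when $\mathcal W$ is compact, $w$ embeds $X_{top}$ densely and $X$ is identified with $w(X)$. Define $\mathrm{Ex}_{\mathcal W}(U)=\mathcal W\setminus\mathrm{cl}_{\mathcal W}(X\setminus U)$ ($U\in\mathrm{Op}_X$); it is admissibly additive if $\mathrm{Ex}_{\mathcal W}(\bigcup\mathcal U)=\bigcup_{U\in\mathcal U}\mathrm{Ex}_{\mathcal W}(U)$ for all $\mathcal U\in\mathrm{Cov}_X$. Let $\mathrm{Op}^S=\{V\text{ open in }\mathcal W:V\cap X\in\mathrm{Op}_X\}$, $\mathrm{Cov}^S=\{\mathcal V\subseteq\mathrm{Op}^S:\{V\cap X:V\in\mathcal V\}\in\mathrm{Cov}_X\}$, $\mathrm{Op}^w=\{\mathrm{Ex}_{\mathcal W}(U):U\in\mathrm{Op}_X\}$, $\mathrm{Cov}^w=\{\mathcal V\in\mathrm{Cov}^S:\mathcal V\subseteq\mathrm{Op}^w\}$. $X$ has its Wallman strict compactification if $\mathcal W$ is compact and $\mathrm{Cov}^w$ is a generalized topology in $\mathcal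 W$. *)

theory Defs
  imports "HOL-Analysis.Analysis"
begin

definition gts :: "'a set \<Rightarrow> 'a set set \<Rightarrow> 'a set set set \<Rightarrow> bool" where
  "gts X Op Cov \<longleftrightarrow>
     Op \<subseteq> Pow X \<and> Cov \<subseteq> Pow Op \<and>
     \<comment> \<open>(A1)\<close>
     {} \<in> Op \<and> X \<in> Op \<and>
     \<comment> \<open>(A2)\<close>
     (\<forall>U\<in>Op. \<forall>V\<in>Op. U \<union> V \<in> Op \<and> U \<inter> V \<in> Op) \<and>
     \<comment> \<open>(A3)\<close>
     (\<forall>\<U>. finite \<U> \<and> \<U> \<subseteq> Op \<longrightarrow> \<U> \<in> Cov) \<and>
     \<comment> \<open>(A4)\<close>
     (\<forall>\<U>\<in>Cov. \<Union>\<U> \<in> Op) \<and>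
     \<comment> \<open>(A5)\<close>
     (\<forall>\<U>\<in>Cov. \<forall>V\<in>Op. V \<subseteq> \<Union>\<U> \<longrightarrow> (\<lambda>U. V \<inter> U) ` \<U> \<in> Cov) \<and>
     \<comment> \<open>(A6)\<close>
     (\<forall>\<U>\<in>Cov. \<forall>\<V>. (\<forall>U\<in>\<U>. \<V> U \<in> Cov \<and> \<Union>(\<V> U) = U) \<longrightarrow> \<Union>(\<V> ` \<U>) \<in> Cov) \<and>
     \<comment> \<open>(A7)\<close>
     (\<forall>\<U>\<in>Cov. \<forall>\<V>. \<V> \<subseteq> Op \<and> \<Union>\<V> = \<Union>\<U> \<and> (\<forall>U\<in>\<U>. \<exists>V\<in>\<V>. U \<subseteq> V) \<longrightarrow> \<V> \<in> Cov) \<and>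
     \<comment> \<open>(A8)\<close>
     (\<forall>\<U>\<in>Cov. \<forall>V. V \<subseteq> \<Union>\<U> \<and> (\<forall>U\<in>\<U>. V \<inter> U \<in> Op) \<longrightarrow> V \<in> Op)"

definition gen_topology_in :: "'a set \<Rightarrow> 'a set set set \<Rightarrow> bool" where
  "gen_topology_in Z Cov \<longleftrightarrow> gts Z (\<Union>Cov) Cov"

definition Cl :: "'a set \<Rightarrow> 'a set set \<Rightarrow> 'a set set" where
  "Cl X Op = (\<lambda>U. X - U) ` Op"

definition weakly_normal :: "'a set \<Rightarrow> 'a set set \<Rightarrow> bool" where
  "weakly_normal X Op \<longleftrightarrow>
     (\<forall>A B. (A \<in> Cl X Op \<or> (\<exists>x\<in>X. A = {x})) \<and> (B \<in> Cl X Op \<or> (\<exists>x\<in>X. B = {x}))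
        \<and> A \<inter> B = {} \<longrightarrow>
        (\<exists>U\<in>Op. \<exists>V\<in>Op. A \<subseteq> U \<and> B \<subseteq> V \<and> U \<inter> V = {}))"

definition fam_filter :: "'a set set \<Rightarrow> 'a set set \<Rightarrow> bool" where
  "fam_filter L F \<longleftrightarrow> F \<subseteq> L \<and> F \<noteq> {} \<and> {} \<notin> F \<and>
     (\<forall>A\<in>F. \<forall>B\<in>F. A \<inter> B \<in> F) \<and>
     (\<forall>A\<in>F. \<forall>B\<in>L. A \<subseteq> B \<longrightarrow> B \<in> F)"

definition fam_ultrafilter :: "'a set set \<Rightarrow> 'a set set \<Rightarrow> bool" where
  "fam_ultrafilter L F \<longleftrightarrow> fam_filter L F \<and> (\<forall>G. fam_filter L G \<and> F \<subseteq> G \<longrightarrow> G = F)"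

definition Wal :: "'a set \<Rightarrow> 'a set set \<Rightarrow> 'a set set set" where
  "Wal X Op = {p. fam_ultrafilter (Cl X Op) p}"

definition wbox :: "'a set \<Rightarrow> 'a set set \<Rightarrow> 'a set \<Rightarrow> 'a set set set" where
  "wbox X Op A = {p \<in> Wal X Op. A \<in> p}"

definition wal_top :: "'a set \<Rightarrow> 'a set set \<Rightarrow> 'a set set topology" where
  "wal_top X Op = subtopology
     (topology_generated_by ((\<lambda>A. Wal X Op - wbox X Op A) ` Cl X Op)) (Wal X Op)"

definition wmap :: "'a set \<Rightarrow> 'a set set \<Rightarrow> 'a \<Rightarrow> 'a set set" where
  "wmap X Op x = {A \<in> Cl X Op. x \<in> A}"

text \<open>Ex_W(U) = W \ cl_W(X \ U), with X identified with w(X).\<close>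
definition Ex :: "'a set \<Rightarrow> 'a set set \<Rightarrow> 'a set \<Rightarrow> 'a set set set" where
  "Ex X Op U = Wal X Op - (wal_top X Op closure_of (wmap X Op ` (X - U)))"

definition admissibly_additive :: "'a set \<Rightarrow> 'a set set \<Rightarrow> 'a set set set \<Rightarrow> bool" where
  "admissibly_additive X Op Cov \<longleftrightarrow>
     (\<forall>\<U>\<in>Cov. Ex X Op (\<Union>\<U>) = (\<Union>U\<in>\<U>. Ex X Op U))"

definition OpS :: "'a set \<Rightarrow> 'a set set \<Rightarrow> 'a set set set set" where
  "OpS X Op = {V. openin (wal_top X Op) V \<and> {x \<in> X. wmap X Op x \<in> V} \<in> Op}"

definition CovS :: "'a set \<Rightarrow> 'a set set \<Rightarrow> 'a set set set \<Rightarrow> 'a set set set set set" where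
  "CovS X Op Cov = {\<V>. \<V> \<subseteq> OpS X Op \<and>
      (\<lambda>V. {x \<in> X. wmap X Op x \<in> V}) ` \<V> \<in> Cov}"

definition Opw :: "'a set \<Rightarrow> 'a set set \<Rightarrow> 'a set set set set" where
  "Opw X Op = Ex X Op ` Op"

definition Covw :: "'a set \<Rightarrow> 'a set set \<Rightarrow> 'a set set set \<Rightarrow> 'a set set set set set" where
  "Covw X Op Cov = {\<V> \<in> CovS X Op Cov. \<V> \<subseteq> Opw X Op}"

definition has_wallman_strict_compactification ::
  "'a set \<Rightarrow> 'a set set \<Rightarrow> 'a set set set \<Rightarrow> bool" where
  "has_wallman_strict_compactification X Op Cov \<longleftrightarrow>
     compact_space (wal_top X Op) \<and> gen_topology_in (Wal X Op) (Covw X Op Cov)"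

end

theory Submission
  imports Defs
begin

lemma ff_parts:
  assumes "fam_filter L F"
  shows ff_sub: "F \<subseteq> L" and ff_ne: "F \<noteq> {}" and ff_empty: "{} \<notin> F"
    and ff_int': "\<forall>A\<in>F. \<forall>B\<in>F. A \<inter> B \<in> F" and ff_up': "\<forall>A\<in>F. \<forall>B\<in>L. A \<subseteq> B \<longrightarrow> B \<in> F"
  using assms unfolding fam_filter_def by - (elim conjE, assumption)+
lemma ff_int: "fam_filter L F \<Longrightarrow> A \<in> F \<Longrightarrow> B \<in> F \<Longrightarrow> A \<inter> B \<in> F"
  using ff_int' by blast
lemma ff_up: "fam_filter L F \<Longrightarrow> A \<in> F \<Longrightarrow> B \<in> L \<Longrightarrow> A \<subseteq> B \<Longrightarrow> B \<in> F"
  using ff_up' by blast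

locale wal =
  fixes X :: "'a set" and Op :: "'a set set" and Cov :: "'a set set set"
  assumes G: "gts X Op Cov" and WN: "weakly_normal X Op"
begin

abbreviation "LL \<equiv> Cl X Op"
abbreviation "WW \<equiv> Wal X Op"
abbreviation "bx \<equiv> wbox X Op"
abbreviation "ww \<equiv> wmap X Op"
abbreviation "TT \<equiv> wal_top X Op"
abbreviation "EE \<equiv> Ex X Op"
abbreviation tr where "tr V \<equiv> {x\<in>X. ww x \<in> V}"

lemma GP:
  shows GP1: "Op \<subseteq> Pow X" and GP2: "Cov \<subseteq> Pow Op" and GP3: "{} \<in> Op" and GP4: "X \<in> Op"
  and GP5: "\<forall>U\<in>Op. \<forall>V\<in>Op. U \<union> V \<in> Op \<and> U \<inter> V \<in> Op"
  and GP6: "\<forall>\<U>. finite \<U> \<and> \<U> \<subseteq> Op \<longrightarrow> \<U> \<in> Cov"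
  and GP7: "\<forall>\<U>\<in>Cov. \<Union>\<U> \<in> Op"
  and GP8: "\<forall>\<U>\<in>Cov. \<forall>V\<in>Op. V \<subseteq> \<Union>\<U> \<longrightarrow> (\<lambda>U. V \<inter> U) ` \<U> \<in> Cov"
  and GP9: "\<forall>\<U>\<in>Cov. \<forall>\<V>. (\<forall>U\<in>\<U>. \<V> U \<in> Cov \<and> \<Union>(\<V> U) = U) \<longrightarrow> \<Union>(\<V> ` \<U>) \<in> Cov"
  and GP10: "\<forall>\<U>\<in>Cov. \<forall>\<V>. \<V> \<subseteq> Op \<and> \<Union>\<V> = \<Union>\<U> \<and> (\<forall>U\<in>\<U>. \<exists>V\<in>\<V>. U \<subseteq> V) \<longrightarrow> \<V> \<in> Cov"
  and GP11: "\<forall>\<U>\<in>Cov. \<forall>V. V \<subseteq> \<Union>\<U> \<and> (\<forall>U\<in>\<U>. V \<inter> U \<in> Op) \<longrightarrow> V \<in> Op"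
  using G unfolding gts_def by - (elim conjE, assumption)+

lemma Op_sub: "U \<in> Op \<Longrightarrow> U \<subseteq> X" using GP1 by blast
lemma Op_empty: "{} \<in> Op" by (rule GP3)
lemma Op_X: "X \<in> Op" by (rule GP4)
lemma Op_un: "U \<in> Op \<Longrightarrow> V \<in> Op \<Longrightarrow> U \<union> V \<in> Op" using GP5 by blast
lemma Op_int: "U \<in> Op \<Longrightarrow> V \<in> Op \<Longrightarrow> U \<inter> V \<in> Op" using GP5 by blast
lemma Cov_sub: "\<U> \<in> Cov \<Longrightarrow> \<U> \<subseteq> Op" using GP2 by blast
lemma A3: "finite \<U> \<Longrightarrow> \<U> \<subseteq> Op \<Longrightarrow> \<U> \<in> Cov" using GP6 by blast
lemma A4: "\<U> \<in> Cov \<Longrightarrow> \<Union>\<U> \<in> Op" using GP7 by blast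
lemma A5: "\<U> \<in> Cov \<Longrightarrow> V \<in> Op \<Longrightarrow> V \<subseteq> \<Union>\<U> \<Longrightarrow> (\<lambda>U. V \<inter> U) ` \<U> \<in> Cov"
  using GP8 by blast
lemma A6: "\<U> \<in> Cov \<Longrightarrow> (\<And>U. U\<in>\<U> \<Longrightarrow> \<V> U \<in> Cov \<and> \<Union>(\<V> U) = U) \<Longrightarrow> \<Union>(\<V> ` \<U>) \<in> Cov"
  by (rule GP9[THEN bspec, THEN spec, THEN mp]) auto
lemma A7: "\<U> \<in> Cov \<Longrightarrow> \<V> \<subseteq> Op \<Longrightarrow> \<Union>\<V> = \<Union>\<U> \<Longrightarrow> (\<And>U. U\<in>\<U> \<Longrightarrow> \<exists>V\<in>\<V>. U \<subseteq> V) \<Longrightarrow> \<V> \<in> Cov"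
  by (rule GP10[THEN bspec, THEN spec, THEN mp]) auto
lemma A8: "\<U> \<in> Cov \<Longrightarrow> V \<subseteq> \<Union>\<U> \<Longrightarrow> (\<And>U. U\<in>\<U> \<Longrightarrow> V \<inter> U \<in> Op) \<Longrightarrow> V \<in> Op"
  by (rule GP11[THEN bspec, THEN spec, THEN mp]) auto

lemma L_sub: "A \<in> LL \<Longrightarrow> A \<subseteq> X" by (auto simp: Cl_def)
lemma compl_L: "U \<in> Op \<Longrightarrow> X - U \<in> LL" by (auto simp: Cl_def)
lemma L_int: assumes "A \<in> LL" "B \<in> LL" shows "A \<inter> B \<in> LL"
proof -
  obtain U V where "U \<in> Op" "V \<in> Op" "A = X - U" "B = X - V" using assms by (auto simp: Cl_def)
  then have "A \<inter> B = X - (U \<union> V)" by auto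
  then show ?thesis using Op_un \<open>U \<in> Op\<close> \<open>V \<in> Op\<close> compl_L by metis
qed
lemma L_un: assumes "A \<in> LL" "B \<in> LL" shows "A \<union> B \<in> LL"
proof -
  obtain U V where "U \<in> Op" "V \<in> Op" "A = X - U" "B = X - V" using assms by (auto simp: Cl_def)
  then have "A \<union> B = X - (U \<inter> V)" by auto
  then show ?thesis using Op_int \<open>U \<in> Op\<close> \<open>V \<in> Op\<close> compl_L by metis
qed
lemma L_empty: "{} \<in> LL" using compl_L[OF Op_X] by simp
lemma L_X: "X \<in> LL" using compl_L[OF Op_empty] by simp

lemma uf_filter: "p \<in> WW \<Longrightarrow> fam_filter LL p"
  by (simp add: Wal_def fam_ultrafilter_def)
lemma uf_max: "p \<in> WW \<Longrightarrow> fam_filter LL H \<Longrightarrow> p \<subseteq> H \<Longrightarrow> H = p"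
  by (simp add: Wal_def fam_ultrafilter_def)
lemma uf_parts:
  assumes "p \<in> WW"
  shows "p \<subseteq> LL" and "p \<noteq> {}" and "{} \<notin> p" and "\<forall>A\<in>p. \<forall>B\<in>p. A \<inter> B \<in> p"
    and "\<forall>A\<in>p. \<forall>B\<in>LL. A \<subseteq> B \<longrightarrow> B \<in> p"
  using uf_filter[OF assms] unfolding fam_filter_def by - (elim conjE, assumption)+
lemma uf_sub: "p \<in> WW \<Longrightarrow> p \<subseteq> LL" by (rule uf_parts)
lemma uf_empty: "p \<in> WW \<Longrightarrow> {} \<notin> p" by (rule uf_parts)
lemma uf_int: "p \<in> WW \<Longrightarrow> A \<in> p \<Longrightarrow> B \<in> p \<Longrightarrow> A \<inter> B \<in> p" using uf_parts(4) by blast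
lemma uf_up: "p \<in> WW \<Longrightarrow> A \<in> p \<Longrightarrow> B \<in> LL \<Longrightarrow> A \<subseteq> B \<Longrightarrow> B \<in> p"
  using uf_parts(5) by blast
lemma uf_X: "p \<in> WW \<Longrightarrow> X \<in> p"
proof -
  assume p: "p \<in> WW"
  then obtain A where "A \<in> p" using uf_parts(2) by blast
  then show ?thesis using uf_up[OF p] L_X L_sub uf_sub[OF p] by blast
qed

lemma uf_notin:
  assumes p: "p \<in> WW" and C: "C \<in> LL" "C \<notin> p"
  shows "\<exists>D\<in>p. C \<inter> D = {}"
proof (rule ccontr)
  assume "\<not> ?thesis"
  hence ne: "\<forall>D\<in>p. C \<inter> D \<noteq> {}" by blast
  define H where "H = {E\<in>LL. \<exists>D\<in>p. C \<inter> D \<subseteq> E}"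
  have CH: "C \<in> H" unfolding H_def using C uf_X[OF p] by blast
  have "fam_filter LL H"
    unfolding fam_filter_def
  proof (intro conjI ballI impI)
    show "H \<subseteq> LL" unfolding H_def by blast
    show "H \<noteq> {}" using CH by blast
    show "{} \<notin> H" unfolding H_def using ne by blast
  next
    fix A B assume "A \<in> H" "B \<in> H"
    then obtain D1 D2 where "A \<in> LL" "B \<in> LL" "D1 \<in> p" "D2 \<in> p" "C \<inter> D1 \<subseteq> A" "C \<inter> D2 \<subseteq> B"
      unfolding H_def by blast
    moreover have "D1 \<inter> D2 \<in> p" using uf_int[OF p] calculation by blast
    ultimately show "A \<inter> B \<in> H" unfolding H_def using L_int by blast
  next
    fix A B assume "A \<in> H" "B \<in> LL" "A \<subseteq> B"
    then show "B \<in> H" unfolding H_def by blast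
  qed
  moreover have "p \<subseteq> H" unfolding H_def using uf_sub[OF p] by blast
  ultimately have "H = p" using uf_max[OF p] by blast
  then show False using CH C by blast
qed

lemma uf_un:
  assumes p: "p \<in> WW" and AB: "A \<in> LL" "B \<in> LL" "A \<union> B \<in> p"
  shows "A \<in> p \<or> B \<in> p"
proof (rule ccontr)
  assume "\<not> ?thesis"
  then have n: "A \<notin> p" "B \<notin> p" by auto
  obtain D1 where D1: "D1 \<in> p" "A \<inter> D1 = {}" using uf_notin[OF p AB(1) n(1)] by blast
  obtain D2 where D2: "D2 \<in> p" "B \<inter> D2 = {}" using uf_notin[OF p AB(2) n(2)] by blast
  have "(A \<union> B) \<inter> (D1 \<inter> D2) \<in> p" using uf_int[OF p AB(3) uf_int[OF p D1(1) D2(1)]] .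
  moreover have "(A \<union> B) \<inter> (D1 \<inter> D2) = {}" using D1(2) D2(2) by blast
  ultimately show False using uf_empty[OF p] by simp
qed

lemma bx_iff: "q \<in> bx A \<longleftrightarrow> q \<in> WW \<and> A \<in> q" by (simp add: wbox_def)

lemma bx_int: "A \<in> LL \<Longrightarrow> B \<in> LL \<Longrightarrow> bx (A \<inter> B) = bx A \<inter> bx B"
proof -
  assume AB: "A \<in> LL" "B \<in> LL"
  have "A \<inter> B \<in> q \<longleftrightarrow> A \<in> q \<and> B \<in> q" if q: "q \<in> WW" for q
    using uf_int[OF q] uf_up[OF q _ AB(1)] uf_up[OF q _ AB(2)] by blast
  then show ?thesis unfolding wbox_def by auto
qed
lemma bx_un: "A \<in> LL \<Longrightarrow> B \<in> LL \<Longrightarrow> bx (A \<union> B) = bx A \<union> bx B"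
  unfolding wbox_def using uf_un uf_up L_un by auto
lemma bx_empty: "bx {} = {}" unfolding wbox_def using uf_empty by auto
lemma bx_X: "bx X = WW" unfolding wbox_def using uf_X by auto

lemma w_in: assumes x: "x \<in> X" shows "ww x \<in> WW"
proof -
  have F: "fam_filter LL (ww x)"
    unfolding fam_filter_def wmap_def using x L_X L_int by auto
  have M: "H = ww x" if H: "fam_filter LL H" "ww x \<subseteq> H" for H
  proof
    show "H \<subseteq> ww x"
    proof
      fix C assume CH: "C \<in> H"
      have CL: "C \<in> LL" using ff_sub[OF H(1)] CH by blast
      show "C \<in> ww x"
      proof (rule ccontr)
        assume "C \<notin> ww x"
        then have "x \<notin> C" using CL by (simp add: wmap_def)
        then obtain U V where UV: "U \<in> Op" "V \<in> Op" "C \<subseteq> U" "{x} \<subseteq> V" "U \<inter> V = {}"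
          using WN x CL unfolding weakly_normal_def by (metis disjoint_iff singletonD)
        have "X - U \<in> ww x" using UV x compl_L unfolding wmap_def by auto
        then have "X - U \<in> H" using H by blast
        then have "C \<inter> (X - U) \<in> H" using ff_int[OF H(1) CH] by blast
        moreover have "C \<inter> (X - U) = {}" using UV by blast
        ultimately show False using ff_empty[OF H(1)] by simp
      qed
    qed
  qed (use that in blast)
  show ?thesis unfolding Wal_def fam_ultrafilter_def using F M by blast
qed


abbreviation "SB \<equiv> (\<lambda>A. WW - bx A) ` LL"

lemma topspace_T: "topspace TT = WW"
proof -
  have "WW - bx {} \<in> SB" using L_empty by blast
  then have "WW \<subseteq> \<Union>SB" using bx_empty by auto
  then show ?thesis unfolding wal_top_def by auto
qed

lemma openin_T: "openin TT Q \<longleftrightarrow> (\<exists>Q0. generate_topology_on SB Q0 \<and> Q = Q0 \<inter> WW)"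
  unfolding wal_top_def by (simp add: openin_subtopology openin_topology_generated_by_iff)

lemma open_basic: "A \<in> LL \<Longrightarrow> openin TT (WW - bx A)"
  unfolding openin_T by (rule exI[of _ "WW - bx A"]) (auto intro: generate_topology_on.Basis)

lemma closed_box: "A \<in> LL \<Longrightarrow> closedin TT (bx A)"
  unfolding closedin_def topspace_T using open_basic by (auto simp: wbox_def)

lemma gen_nbhd:
  "generate_topology_on SB Q0 \<Longrightarrow> p \<in> Q0 \<Longrightarrow> p \<in> WW \<Longrightarrow> \<exists>B\<in>LL. B \<notin> p \<and> WW - bx B \<subseteq> Q0"
proof (induction arbitrary: p rule: generate_topology_on.induct)
  case Empty
  then show ?case by simp
next
  case (Int a b)
  then obtain B1 B2 where B: "B1 \<in> LL" "B1 \<notin> p" "WW - bx B1 \<subseteq> a" "B2 \<in> LL" "B2 \<notin> p" "WW - bx B2 \<subseteq> b"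
    by blast
  then have "B1 \<union> B2 \<notin> p" using uf_un[OF Int.prems(2)] by blast
  moreover have "WW - bx (B1 \<union> B2) \<subseteq> a \<inter> b" using B bx_un by auto
  ultimately show ?case using L_un B by blast
next
  case (UN K)
  then obtain k where "k \<in> K" "p \<in> k" by blast
  then show ?case using UN.IH[of k p] UN.prems by blast
next
  case (Basis s)
  then obtain A where "A \<in> LL" "s = WW - bx A" by blast
  then show ?case using Basis.prems by (auto simp: wbox_def)
qed

lemma open_nbhd: "openin TT Q \<Longrightarrow> p \<in> Q \<Longrightarrow> \<exists>B\<in>LL. B \<notin> p \<and> WW - bx B \<subseteq> Q"
proof -
  assume "openin TT Q" "p \<in> Q"
  then obtain Q0 where "generate_topology_on SB Q0" "Q = Q0 \<inter> WW" unfolding openin_T by blast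
  then show ?thesis using gen_nbhd[of Q0 p] \<open>p \<in> Q\<close> by blast
qed

lemma closure_w: assumes A: "A \<in> LL" shows "TT closure_of (ww ` A) = bx A"
proof
  have "ww ` A \<subseteq> bx A"
    using A L_sub w_in by (auto simp: wbox_def wmap_def)
  then show "TT closure_of (ww ` A) \<subseteq> bx A"
    using closure_of_minimal closed_box[OF A] by blast
next
  show "bx A \<subseteq> TT closure_of (ww ` A)"
  proof
    fix p assume p: "p \<in> bx A"
    then have pW: "p \<in> WW" and Ap: "A \<in> p" by (auto simp: wbox_def)
    show "p \<in> TT closure_of (ww ` A)"
      unfolding in_closure_of topspace_T
    proof (intro conjI allI impI pW)
      fix Q assume "p \<in> Q \<and> openin TT Q"
      then obtain B where B: "B \<in> LL" "B \<notin> p" "WW - bx B \<subseteq> Q" using open_nbhd by blast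
      have "\<not> A \<subseteq> B" using uf_up[OF pW Ap B(1)] B(2) by blast
      then obtain a where a: "a \<in> A" "a \<notin> B" by blast
      have "ww a \<in> WW" using a A L_sub w_in by blast
      moreover have "B \<notin> ww a" using a by (simp add: wmap_def)
      ultimately have "ww a \<in> Q" using B(3) by (auto simp: wbox_def)
      then show "\<exists>y. y \<in> ww ` A \<and> y \<in> Q" using a by blast
    qed
  qed
qed

lemma Ex_eq: "U \<in> Op \<Longrightarrow> EE U = WW - bx (X - U)"
  by (simp add: Ex_def closure_w compl_L)

lemma tr_Ex: assumes U: "U \<in> Op" shows "tr (EE U) = U"
proof -
  have "x \<in> U" if "x \<in> X" "ww x \<notin> bx (X - U)" for x
    using that w_in compl_L[OF U] by (auto simp: wbox_def wmap_def)
  moreover have "ww x \<notin> bx (X - U)" if "x \<in> U" for x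
    using that by (auto simp: wbox_def wmap_def)
  ultimately show ?thesis using Ex_eq[OF U] Op_sub[OF U] w_in by auto
qed

lemma Ex_int: "U \<in> Op \<Longrightarrow> V \<in> Op \<Longrightarrow> EE (U \<inter> V) = EE U \<inter> EE V"
proof -
  assume "U \<in> Op" "V \<in> Op"
  moreover have "X - (U \<inter> V) = (X - U) \<union> (X - V)" by blast
  ultimately show ?thesis using Ex_eq Op_int bx_un compl_L by auto
qed

lemma Ex_un: "U \<in> Op \<Longrightarrow> V \<in> Op \<Longrightarrow> EE (U \<union> V) = EE U \<union> EE V"
proof -
  assume "U \<in> Op" "V \<in> Op"
  moreover have "X - (U \<union> V) = (X - U) \<inter> (X - V)" by blast
  ultimately show ?thesis using Ex_eq Op_un bx_int compl_L by auto
qed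

lemma Ex_empty: "EE {} = {}" using Ex_eq[OF Op_empty] bx_X by simp
lemma Ex_X: "EE X = WW" using Ex_eq[OF Op_X] bx_empty by simp
lemma Ex_sub: "EE U \<subseteq> WW" unfolding Ex_def by blast
lemma Ex_open: "U \<in> Op \<Longrightarrow> openin TT (EE U)"
  using Ex_eq open_basic compl_L by simp
lemma Ex_OpS: "U \<in> Op \<Longrightarrow> EE U \<in> OpS X Op"
  unfolding OpS_def using Ex_open tr_Ex by simp
lemma Ex_mono: assumes "U \<in> Op" "V \<in> Op" "U \<subseteq> V" shows "EE U \<subseteq> EE V"
proof -
  have "bx (X - V) \<subseteq> bx (X - U)"
    using assms uf_up compl_L by (auto simp: wbox_def) (meson Diff_mono order_refl)
  then show ?thesis using Ex_eq assms by auto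
qed
lemma Ex_mono_iff: "U \<in> Op \<Longrightarrow> V \<in> Op \<Longrightarrow> EE U \<subseteq> EE V \<longleftrightarrow> U \<subseteq> V"
proof
  assume "U \<in> Op" "V \<in> Op" "EE U \<subseteq> EE V"
  then have "tr (EE U) \<subseteq> tr (EE V)" by blast
  then show "U \<subseteq> V" using tr_Ex \<open>U \<in> Op\<close> \<open>V \<in> Op\<close> by simp
qed (rule Ex_mono)

lemma Opw_OpS: "Opw X Op \<subseteq> OpS X Op" unfolding Opw_def using Ex_OpS by blast

lemma Covw_char: "\<V> \<in> Covw X Op Cov \<longleftrightarrow> (\<exists>\<U>\<in>Cov. \<V> = EE ` \<U>)"
proof
  assume V: "\<V> \<in> Covw X Op Cov"
  then have c: "tr ` \<V> \<in> Cov" and s: "\<V> \<subseteq> EE ` Op"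
    unfolding Covw_def CovS_def Opw_def by auto
  have "EE ` (tr ` \<V>) = \<V>"
  proof -
    have "EE (tr V) = V" if "V \<in> \<V>" for V
      using s that tr_Ex by force
    then show ?thesis by (simp add: image_image)
  qed
  then show "\<exists>\<U>\<in>Cov. \<V> = EE ` \<U>" using c by metis
next
  assume "\<exists>\<U>\<in>Cov. \<V> = EE ` \<U>"
  then obtain \<U> where U: "\<U> \<in> Cov" "\<V> = EE ` \<U>" by blast
  have e: "\<And>U. U \<in> \<U> \<Longrightarrow> tr (EE U) = U" using U(1) Cov_sub tr_Ex by blast
  have "(\<lambda>U. tr (EE U)) ` \<U> = (\<lambda>U. U) ` \<U>" by (rule image_cong) (simp_all add: e)
  then have t: "tr ` \<V> = \<U>" by (simp add: U(2) image_image)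
  have s1: "\<V> \<subseteq> OpS X Op" using U Cov_sub Ex_OpS by blast
  have s2: "\<V> \<subseteq> Opw X Op" unfolding Opw_def using U Cov_sub by blast
  show "\<V> \<in> Covw X Op Cov"
    unfolding Covw_def CovS_def using s1 s2 t U(1) by simp
qed



lemma uf_extend:
  assumes F: "fam_filter LL F" shows "\<exists>p\<in>WW. F \<subseteq> p"
proof -
  define A where "A = {H. fam_filter LL H \<and> F \<subseteq> H}"
  have "\<exists>M\<in>A. \<forall>Z\<in>A. M \<subseteq> Z \<longrightarrow> Z = M"
  proof (rule subset_Zorn)
    fix C assume ch: "subset.chain A C"
    show "\<exists>U\<in>A. \<forall>Z\<in>C. Z \<subseteq> U"
    proof (cases "C = {}")
      case True
      then show ?thesis using F unfolding A_def by blast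
    next
      case False
      have CA: "C \<subseteq> A" and cmp: "\<forall>Y\<in>C. \<forall>Z\<in>C. Y \<subseteq> Z \<or> Z \<subseteq> Y"
        using ch by (auto simp: subset_chain_def)
      have fC: "\<And>Y. Y \<in> C \<Longrightarrow> fam_filter LL Y" using CA unfolding A_def by blast
      have "fam_filter LL (\<Union>C)"
        unfolding fam_filter_def
      proof (intro conjI ballI impI)
        show "\<Union>C \<subseteq> LL" using fC ff_sub by blast
        obtain Y where "Y \<in> C" using False by blast
        then show "\<Union>C \<noteq> {}" using fC[of Y] ff_ne[of LL Y] by blast
        show "{} \<notin> \<Union>C" using fC ff_empty by blast
      next
        fix a b assume "a \<in> \<Union>C" "b \<in> \<Union>C"
        then obtain Y Z where YZ: "Y \<in> C" "Z \<in> C" "a \<in> Y" "b \<in> Z" by blast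
        show "a \<inter> b \<in> \<Union>C"
        proof (cases "Y \<subseteq> Z")
          case True
          then show ?thesis using ff_int[OF fC[OF YZ(2)], of a b] YZ by blast
        next
          case False
          then have "Z \<subseteq> Y" using cmp YZ by blast
          then show ?thesis using ff_int[OF fC[OF YZ(1)], of a b] YZ by blast
        qed
      next
        fix a b assume "a \<in> \<Union>C" "b \<in> LL" "a \<subseteq> b"
        then obtain Y where "Y \<in> C" "a \<in> Y" by blast
        then show "b \<in> \<Union>C" using ff_up[OF fC[OF \<open>Y \<in> C\<close>] \<open>a \<in> Y\<close> \<open>b \<in> LL\<close> \<open>a \<subseteq> b\<close>] by blast
      qed
      moreover have "F \<subseteq> \<Union>C" using False CA unfolding A_def by blast
      ultimately show ?thesis unfolding A_def by blast
    qed
  qed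
  then obtain M where M: "M \<in> A" "\<forall>Z\<in>A. M \<subseteq> Z \<longrightarrow> Z = M" by blast
  have "M \<in> WW" unfolding Wal_def fam_ultrafilter_def
    using M unfolding A_def by auto
  then show ?thesis using M unfolding A_def by blast
qed

lemma uf_Inter: "p \<in> WW \<Longrightarrow> finite S \<Longrightarrow> S \<noteq> {} \<Longrightarrow> S \<subseteq> p \<Longrightarrow> \<Inter>S \<in> p"
proof -
  assume p: "p \<in> WW"
  show "finite S \<Longrightarrow> S \<noteq> {} \<Longrightarrow> S \<subseteq> p \<Longrightarrow> \<Inter>S \<in> p"
    by (induction S rule: finite_ne_induct) (auto intro: uf_int[OF p])
qed

lemma compact: "compact_space TT"
  unfolding compact_space_alt topspace_T
proof (intro allI impI)
  fix \<U> assume U: "(\<forall>U\<in>\<U>. openin TT U) \<and> WW \<subseteq> \<Union>\<U>"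
  show "\<exists>\<F>. finite \<F> \<and> \<F> \<subseteq> \<U> \<and> WW \<subseteq> \<Union>\<F>"
  proof (rule ccontr)
    assume neg: "\<not> ?thesis"
    have ex: "\<forall>p\<in>WW. \<exists>BU. snd BU \<in> \<U> \<and> fst BU \<in> LL \<and> fst BU \<notin> p \<and> WW - bx (fst BU) \<subseteq> snd BU"
    proof
      fix p assume "p \<in> WW"
      then obtain V where V: "V \<in> \<U>" "p \<in> V" using U by blast
      have "openin TT V" using U V(1) by blast
      then obtain B where "B \<in> LL" "B \<notin> p" "WW - bx B \<subseteq> V" using open_nbhd[of V p] V(2) by blast
      then show "\<exists>BU. snd BU \<in> \<U> \<and> fst BU \<in> LL \<and> fst BU \<notin> p \<and> WW - bx (fst BU) \<subseteq> snd BU"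
        using \<open>V \<in> \<U>\<close> by (intro exI[of _ "(B, V)"]) auto
    qed
    obtain f where f: "\<forall>p\<in>WW. snd (f p) \<in> \<U> \<and> fst (f p) \<in> LL \<and> fst (f p) \<notin> p \<and> WW - bx (fst (f p)) \<subseteq> snd (f p)"
      using bchoice[OF ex] by blast
    define Bf where "Bf = (\<lambda>p. fst (f p))"
    define Uf where "Uf = (\<lambda>p. snd (f p))"
    have f': "\<And>p. p \<in> WW \<Longrightarrow> Uf p \<in> \<U> \<and> Bf p \<in> LL \<and> Bf p \<notin> p \<and> WW - bx (Bf p) \<subseteq> Uf p"
      using f unfolding Bf_def Uf_def by blast
    have key: "X \<inter> \<Inter>(Bf ` S) \<noteq> {}" if S: "finite S" "S \<subseteq> WW" for S
    proof
      assume e: "X \<inter> \<Inter>(Bf ` S) = {}"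
      have "WW \<subseteq> \<Union>(Uf ` S)"
      proof
        fix p assume p: "p \<in> WW"
        have "\<exists>q\<in>S. Bf q \<notin> p"
        proof (rule ccontr)
          assume "\<not> ?thesis"
          then have sp: "insert X (Bf ` S) \<subseteq> p" using uf_X[OF p] by blast
          have "\<Inter>(insert X (Bf ` S)) \<in> p" by (rule uf_Inter[OF p _ _ sp]) (use S(1) in simp_all)
          then show False using e uf_empty[OF p] by simp
        qed
        then obtain q where "q \<in> S" "Bf q \<notin> p" by blast
        then have "p \<in> Uf q" using f'[of q] S p by (auto simp: wbox_def)
        then show "p \<in> \<Union>(Uf ` S)" using \<open>q \<in> S\<close> by blast
      qed
      moreover have "Uf ` S \<subseteq> \<U>" using f' S by blast
      moreover have "finite (Uf ` S)" using S(1) by simp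
      ultimately show False using neg by blast
    qed
    define F where "F = {C\<in>LL. \<exists>S. finite S \<and> S \<subseteq> WW \<and> X \<inter> \<Inter>(Bf ` S) \<subseteq> C}"
    have "fam_filter LL F"
      unfolding fam_filter_def
    proof (intro conjI ballI impI)
      show "F \<subseteq> LL" unfolding F_def by blast
      have "X \<in> F" unfolding F_def using L_X by (auto intro!: exI[of _ "{}"])
      then show "F \<noteq> {}" by blast
      show "{} \<notin> F" unfolding F_def using key by blast
    next
      fix a b assume "a \<in> F" "b \<in> F"
      then obtain S1 S2 where "a \<in> LL" "b \<in> LL" "finite S1" "S1 \<subseteq> WW" "X \<inter> \<Inter>(Bf ` S1) \<subseteq> a"
        "finite S2" "S2 \<subseteq> WW" "X \<inter> \<Inter>(Bf ` S2) \<subseteq> b" unfolding F_def by blast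
      moreover have "X \<inter> \<Inter>(Bf ` (S1 \<union> S2)) \<subseteq> a \<inter> b" using calculation by auto
      ultimately show "a \<inter> b \<in> F" unfolding F_def using L_int
        by (intro CollectI conjI exI[of _ "S1 \<union> S2"]) auto
    next
      fix a b assume "a \<in> F" "b \<in> LL" "a \<subseteq> b"
      then show "b \<in> F" unfolding F_def by blast
    qed
    then obtain p where p: "p \<in> WW" "F \<subseteq> p" using uf_extend by blast
    have "Bf p \<in> F" unfolding F_def using f'[OF p(1)] p(1)
      by (intro CollectI conjI exI[of _ "{p}"]) auto
    then show False using p f'[OF p(1)] by blast
  qed
qed

lemma tr_Union: "tr (\<Union>\<V>) = \<Union>(tr ` \<V>)" by auto

lemma Un_Covw: "\<Union>(Covw X Op Cov) = Opw X Op"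
proof
  show "\<Union>(Covw X Op Cov) \<subseteq> Opw X Op" unfolding Covw_def by blast
  show "Opw X Op \<subseteq> \<Union>(Covw X Op Cov)"
  proof
    fix V assume "V \<in> Opw X Op"
    then obtain U where U: "U \<in> Op" "V = EE U" unfolding Opw_def by blast
    have "{U} \<in> Cov" using A3 U by auto
    then have "EE ` {U} \<in> Covw X Op Cov" using Covw_char by blast
    then show "V \<in> \<Union>(Covw X Op Cov)" using U by auto
  qed
qed



lemma Covw_tr: "\<V> \<in> Covw X Op Cov \<Longrightarrow> tr ` \<V> \<in> Cov" unfolding Covw_def CovS_def by simp
lemma Covw_sub: "\<V> \<in> Covw X Op Cov \<Longrightarrow> \<V> \<subseteq> Opw X Op" unfolding Covw_def by simp
lemma Covw_I: "\<V> \<subseteq> Opw X Op \<Longrightarrow> tr ` \<V> \<in> Cov \<Longrightarrow> \<V> \<in> Covw X Op Cov"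
  unfolding Covw_def CovS_def using Opw_OpS by auto
lemma Opw_E: "W \<in> Opw X Op \<Longrightarrow> tr W \<in> Op \<and> EE (tr W) = W"
  unfolding Opw_def using tr_Ex by auto
lemma tr_UEx: assumes U: "\<U> \<in> Cov" shows "tr (\<Union>(EE ` \<U>)) = \<Union>\<U>"
proof -
  have e: "\<And>U. U \<in> \<U> \<Longrightarrow> tr (EE U) = U" using Cov_sub[OF U] tr_Ex by blast
  have "tr (\<Union>(EE ` \<U>)) = (\<Union>U\<in>\<U>. tr (EE U))" by auto
  also have "\<dots> = \<Union>\<U>" using e by simp
  finally show ?thesis .
qed

lemma dir1:
  assumes H: "gen_topology_in WW (Covw X Op Cov)"
  shows "admissibly_additive X Op Cov"
  unfolding admissibly_additive_def
proof
  fix \<U> assume U: "\<U> \<in> Cov"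
  have c: "EE ` \<U> \<in> Covw X Op Cov" using U Covw_char by blast
  have "\<forall>\<V>\<in>Covw X Op Cov. \<Union>\<V> \<in> \<Union>(Covw X Op Cov)"
    using H unfolding gen_topology_in_def gts_def by (elim conjE) assumption
  then have "\<Union>(EE ` \<U>) \<in> Opw X Op" using c Un_Covw by blast
  then obtain V where V: "V \<in> Op" "\<Union>(EE ` \<U>) = EE V" unfolding Opw_def by blast
  have e: "\<And>U. U \<in> \<U> \<Longrightarrow> tr (EE U) = U" using Cov_sub[OF U] tr_Ex by blast
  have "tr (\<Union>(EE ` \<U>)) = (\<Union>U\<in>\<U>. tr (EE U))" by auto
  also have "\<dots> = \<Union>\<U>" using e by simp
  finally have "tr (\<Union>(EE ` \<U>)) = \<Union>\<U>" .
  moreover have "tr (EE V) = V" using tr_Ex V by simp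
  ultimately have "V = \<Union>\<U>" using V by simp
  then show "EE (\<Union>\<U>) = (\<Union>U\<in>\<U>. EE U)" using V by simp
qed

lemma dir2:
  assumes AA: "admissibly_additive X Op Cov"
  shows "gen_topology_in WW (Covw X Op Cov)"
proof -
  have add: "EE (\<Union>\<U>) = \<Union>(EE ` \<U>)" if "\<U> \<in> Cov" for \<U>
    using AA that unfolding admissibly_additive_def by blast
  have h1: "Opw X Op \<subseteq> Pow WW" unfolding Opw_def using Ex_sub by blast
  have h2: "Covw X Op Cov \<subseteq> Pow (Opw X Op)" unfolding Covw_def by blast
  have h3: "{} \<in> Opw X Op" unfolding Opw_def using Ex_empty Op_empty by force
  have h4: "WW \<in> Opw X Op" unfolding Opw_def using Ex_X Op_X by force
  have h5: "\<forall>U\<in>Opw X Op. \<forall>V\<in>Opw X Op. U \<union> V \<in> Opw X Op \<and> U \<inter> V \<in> Opw X Op"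
    unfolding Opw_def using Ex_un Ex_int Op_un Op_int by (auto, metis image_eqI, metis image_eqI)
  have h6: "\<forall>\<V>. finite \<V> \<and> \<V> \<subseteq> Opw X Op \<longrightarrow> \<V> \<in> Covw X Op Cov"
  proof (intro allI impI)
    fix \<V> assume a: "finite \<V> \<and> \<V> \<subseteq> Opw X Op"
    then have "tr ` \<V> \<subseteq> Op" using Opw_E by blast
    then have "tr ` \<V> \<in> Cov" using A3 a by simp
    then show "\<V> \<in> Covw X Op Cov" using a by (intro Covw_I) simp_all
  qed
  have h7: "\<forall>\<V>\<in>Covw X Op Cov. \<Union>\<V> \<in> Opw X Op"
  proof
    fix \<V> assume a: "\<V> \<in> Covw X Op Cov"
    obtain \<U> where U: "\<U> \<in> Cov" "\<V> = EE ` \<U>" using a(1) unfolding Covw_char by blast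
    then have "\<Union>\<V> = EE (\<Union>\<U>)" using add by simp
    then show "\<Union>\<V> \<in> Opw X Op" unfolding Opw_def using A4[OF U(1)] by blast
  qed
  have h8: "\<forall>\<V>\<in>Covw X Op Cov. \<forall>V'\<in>Opw X Op. V' \<subseteq> \<Union>\<V> \<longrightarrow> (\<lambda>U. V' \<inter> U) ` \<V> \<in> Covw X Op Cov"
  proof (intro ballI impI)
    fix \<V> V' assume a: "\<V> \<in> Covw X Op Cov" "V' \<in> Opw X Op" "V' \<subseteq> \<Union>\<V>"
    obtain \<U> where U: "\<U> \<in> Cov" "\<V> = EE ` \<U>" using a(1) unfolding Covw_char by blast
    obtain V where V: "V \<in> Op" "V' = EE V" using a unfolding Opw_def by blast
    have "EE V \<subseteq> EE (\<Union>\<U>)" using a U V add by simp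
    then have sub: "V \<subseteq> \<Union>\<U>" using Ex_mono_iff V A4 U by blast
    have "(\<lambda>U. EE V \<inter> EE U) ` \<U> = (\<lambda>U. EE (V \<inter> U)) ` \<U>"
    proof (rule image_cong)
      fix U assume "U \<in> \<U>"
      then show "EE V \<inter> EE U = EE (V \<inter> U)" using Ex_int[OF V(1)] Cov_sub[OF U(1)] by blast
    qed simp
    then have eq: "(\<lambda>U. V' \<inter> U) ` \<V> = EE ` ((\<lambda>U. V \<inter> U) ` \<U>)"
      by (simp add: U(2) V(2) image_image)
    show "(\<lambda>U. V' \<inter> U) ` \<V> \<in> Covw X Op Cov"
      unfolding eq Covw_char by (rule bexI[OF refl A5[OF U(1) V(1) sub]])
  qed
  have h9: "\<forall>\<V>\<in>Covw X Op Cov. \<forall>f. (\<forall>U\<in>\<V>. f U \<in> Covw X Op Cov \<and> \<Union>(f U) = U) \<longrightarrow> \<Union>(f ` \<V>) \<in> Covw X Op Cov"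
  proof (intro ballI allI impI)
    fix \<V> f assume a: "\<V> \<in> Covw X Op Cov" "\<forall>U\<in>\<V>. f U \<in> Covw X Op Cov \<and> \<Union>(f U) = U"
    obtain \<U> where U: "\<U> \<in> Cov" "\<V> = EE ` \<U>" using a(1) unfolding Covw_char by blast
    define g where "g U = tr ` (f (EE U))" for U
    have gp: "g U \<in> Cov \<and> \<Union>(g U) = U" if u: "U \<in> \<U>" for U
    proof -
      have "EE U \<in> \<V>" using U(2) u by blast
      then have fc: "f (EE U) \<in> Covw X Op Cov" "\<Union>(f (EE U)) = EE U" using a(2) by auto
      have "g U \<in> Cov" unfolding g_def by (rule Covw_tr[OF fc(1)])
      moreover have "\<Union>(g U) = tr (\<Union>(f (EE U)))" by (simp only: g_def tr_Union)
      moreover have "tr (EE U) = U" using tr_Ex Cov_sub[OF U(1)] u by blast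
      ultimately show ?thesis using fc(2) by simp
    qed
    have gc: "\<Union>(g ` \<U>) \<in> Cov" by (rule A6[OF U(1) gp])
    have "tr ` \<Union>(f ` \<V>) = \<Union>(g ` \<U>)" unfolding g_def U(2) by (simp only: image_Union image_image)
    moreover have "\<Union>(f ` \<V>) \<subseteq> Opw X Op" using a(2) Covw_sub by blast
    ultimately show "\<Union>(f ` \<V>) \<in> Covw X Op Cov" using gc by (intro Covw_I) simp_all
  qed
  have h10: "\<forall>\<V>\<in>Covw X Op Cov. \<forall>\<W>. \<W> \<subseteq> Opw X Op \<and> \<Union>\<W> = \<Union>\<V> \<and> (\<forall>U\<in>\<V>. \<exists>V\<in>\<W>. U \<subseteq> V) \<longrightarrow> \<W> \<in> Covw X Op Cov"
  proof (intro ballI allI impI)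
    fix \<V> \<W> assume a: "\<V> \<in> Covw X Op Cov" "\<W> \<subseteq> Opw X Op \<and> \<Union>\<W> = \<Union>\<V> \<and> (\<forall>U\<in>\<V>. \<exists>V\<in>\<W>. U \<subseteq> V)"
    obtain \<U> where U: "\<U> \<in> Cov" "\<V> = EE ` \<U>" using a(1) unfolding Covw_char by blast
    have w: "\<W> \<subseteq> Opw X Op" using a(2) by simp
    have s: "tr ` \<W> \<subseteq> Op"
    proof
      fix x assume "x \<in> tr ` \<W>"
      then obtain W where "W \<in> \<W>" "x = tr W" by blast
      then show "x \<in> Op" using Opw_E w by blast
    qed
    have "\<Union>(tr ` \<W>) = tr (\<Union>\<W>)" by auto
    also have "\<dots> = tr (\<Union>\<V>)" using a by simp
    also have "\<dots> = \<Union>\<U>" using U tr_UEx by simp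
    finally have e: "\<Union>(tr ` \<W>) = \<Union>\<U>" .
    have ex: "\<exists>V\<in>tr ` \<W>. U \<subseteq> V" if u: "U \<in> \<U>" for U
    proof -
      have "EE U \<in> \<V>" using U(2) u by blast
      then obtain V where V: "V \<in> \<W>" "EE U \<subseteq> V" using a by blast
      then have "tr (EE U) \<subseteq> tr V" by blast
      moreover have "tr (EE U) = U" using tr_Ex Cov_sub[OF U(1)] u by blast
      ultimately show ?thesis using V(1) by auto
    qed
    have "tr ` \<W> \<in> Cov" by (rule A7[OF U(1) s e ex])
    then show "\<W> \<in> Covw X Op Cov" using a by (intro Covw_I) simp_all
  qed
  have h11: "\<forall>\<V>\<in>Covw X Op Cov. \<forall>V'. V' \<subseteq> \<Union>\<V> \<and> (\<forall>U\<in>\<V>. V' \<inter> U \<in> Opw X Op) \<longrightarrow> V' \<in> Opw X Op"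
  proof (intro ballI allI impI)
    fix \<V> V' assume a: "\<V> \<in> Covw X Op Cov" "V' \<subseteq> \<Union>\<V> \<and> (\<forall>U\<in>\<V>. V' \<inter> U \<in> Opw X Op)"
    obtain \<U> where U: "\<U> \<in> Cov" "\<V> = EE ` \<U>" using a(1) unfolding Covw_char by blast
    define V where "V = tr V'"
    have eU: "tr (EE U) = U \<and> U \<in> Op" if "U \<in> \<U>" for U using tr_Ex Cov_sub[OF U(1)] that by blast
    have int: "V \<inter> U \<in> Op \<and> V' \<inter> EE U = EE (V \<inter> U)" if u: "U \<in> \<U>" for U
    proof -
      have "EE U \<in> \<V>" using U(2) u by blast
      then have "V' \<inter> EE U \<in> Opw X Op" using a by blast
      then have h: "tr (V' \<inter> EE U) \<in> Op" "EE (tr (V' \<inter> EE U)) = V' \<inter> EE U" using Opw_E by blast+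
      have "tr (V' \<inter> EE U) = V \<inter> tr (EE U)" unfolding V_def by auto
      also have "\<dots> = V \<inter> U" using eU[OF u] by simp
      finally show ?thesis using h by simp
    qed
    have "V \<subseteq> tr (\<Union>\<V>)" unfolding V_def using a by auto
    then have vs: "V \<subseteq> \<Union>\<U>" using tr_UEx[OF U(1)] U(2) by simp
    have VO: "V \<in> Op" using A8[OF U(1) vs] int by blast
    have "V' = (\<Union>U\<in>\<U>. V' \<inter> EE U)" using a U(2) by auto
    also have "\<dots> = (\<Union>U\<in>\<U>. EE V \<inter> EE U)"
    proof (rule SUP_cong[OF refl])
      fix U assume u: "U \<in> \<U>"
      show "V' \<inter> EE U = EE V \<inter> EE U" using int[OF u] Ex_int[OF VO, of U] eU[OF u] by simp
    qed
    also have "\<dots> = EE V \<inter> (\<Union>U\<in>\<U>. EE U)" by blast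
    also have "\<dots> = EE V \<inter> EE (\<Union>\<U>)" using add[OF U(1)] by simp
    also have "\<dots> = EE V" using Ex_mono[OF VO A4[OF U(1)] vs] by blast
    finally show "V' \<in> Opw X Op" using VO unfolding Opw_def by blast
  qed
  show ?thesis unfolding gen_topology_in_def Un_Covw gts_def
    using h1 h2 h3 h4 h5 h6 h7 h8 h9 h10 h11 by (intro conjI) assumption+
qed

lemma main: "has_wallman_strict_compactification X Op Cov \<longleftrightarrow> admissibly_additive X Op Cov"
  unfolding has_wallman_strict_compactification_def using dir1 dir2 compact by blast


end

theorem theorem5p19:
  fixes X :: "'a set" and Op :: "'a set set" and Cov :: "'a set set set"
  assumes "gts X Op Cov" and "weakly_normal X Op"
  shows "has_wallman_strict_compactification X Op Cov \<longleftrightarrow> admissibly_additive X Op Cov"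
proof -
  interpret wal X Op Cov using assms by unfold_locales
  show ?thesis by (rule main)
qed

end
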